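(* Assume $\|\mathbf G^{(l)}\|\le A_0B_0^{l-1}$ for all $l\ge1$. For each eigenvalue $\mu=\lambda\pm\mathrm i\sqrt{1-\lambda^2}$ of $\mathbf U$ with $\lambda\in\sigma(\mathbf T)$, $|\lambda|<1$, the perturbed eigenvalue $\mu(\chi)=\lambda(\chi)\pm\mathrm i\sqrt{1-\lambda(\chi)^2}$ has an expansion $\mu(\chi)=\mu+\sum_{n\ge1}\chi^n\mu^{(n)}$ near $\chi=0$, and there exist constants $A_{13},B_{13}>0$ such that $|\mu^{(n)}|\le A_{13}B_{13}^{n-1}$ for all $n\ge1$; consequently the coefficients $a_1(n;m)$ of $\chi^n$ in $\mu(\chi)^{2m}$ satisfy $|a_1(n;m)|\le A_{14}B_{14}^{n-1}$ for constants $A_{14},B_{14}>0$ (depending also on $m$).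
   Context: $\mathbf G=[g_{ij}]$ is an $N\times N$ Google matrix with all entries positive. Perturbation: $\mathbf G(\chi)=[g_{ij}(\chi)]=\mathbf G+\sum_{l\ge1}\chi^l\mathbf G^{(l)}$, $\chi\in\mathbb C$, convergent near $0$, $\|\cdot\|$ the operator $2$-norm; for real $\chi$ near $0$, $\mathbf G(\chi)$ is row-stochastic with positive entries. $\mathbf T(\chi)=[\sqrt{g_{ij}(\chi)g_{ji}(\chi)}]$, $\mathbf T=\mathbf T(0)$; $\lambda(\chi)$ denotes the analytic eigenvalue branch of $\mathbf T(\chi)$ through the eigenvalue $\lambda$ of $\mathbf T$. $\mathbf U=\mathbf S_w(2\mathbf B-\mathbf I)$ with $\mathbf B=\sum_j|\psi_j\rangle\langle\psi_j|$, $|\psi_j\rangle=|j\rangle\otimes\sum_k\sqrt{g_{jk}}|k\rangle$, $\mathbf S_w=\sum_{j,k}|k,j\rangle\langle j,k|$; its eigenvalues associated with $\mathbf T$ are $\lambda\pm\mathrm i\sqrt{1-\lambda^2}$, $\lambda\in\sigma(\mathbf T)$. The square root branch is chosen holomorphic in $\chi$ near $0$. *)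

theory Defs
  imports "HOL-Analysis.Analysis"
begin

definition op2norm :: "complex^'n^'n \<Rightarrow> real" where
  "op2norm A = onorm (\<lambda>x::complex^'n. A *v x)"

definition pert_entry :: "complex^'n^'n \<Rightarrow> (nat \<Rightarrow> complex^'n^'n) \<Rightarrow> complex \<Rightarrow> 'n \<Rightarrow> 'n \<Rightarrow> complex" where
  "pert_entry G Gp z i j = G $ i $ j + (\<Sum>l. z ^ Suc l * (Gp (Suc l) $ i $ j))"

definition Tmat :: "complex^'n^'n \<Rightarrow> (nat \<Rightarrow> complex^'n^'n) \<Rightarrow> complex \<Rightarrow> complex^'n^'n" where
  "Tmat G Gp z = (\<chi> i j. csqrt (pert_entry G Gp z i j * pert_entry G Gp z j i))"

definition is_eigenvalue :: "complex^'n^'n \<Rightarrow> complex \<Rightarrow> bool" where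
  "is_eigenvalue A z \<longleftrightarrow> (\<exists>v. v \<noteq> 0 \<and> A *v v = z *s v)"

definition pos_stochastic :: "(('n::finite) \<Rightarrow> 'n \<Rightarrow> complex) \<Rightarrow> bool" where
  "pos_stochastic g \<longleftrightarrow> (\<forall>i j. g i j \<in> \<real> \<and> Re (g i j) > 0) \<and> (\<forall>i. (\<Sum>j\<in>UNIV. g i j) = 1)"

definition tcoeff :: "(complex \<Rightarrow> complex) \<Rightarrow> nat \<Rightarrow> complex" where
  "tcoeff f n = (deriv ^^ n) f 0 / fact n"

end

theory Submission
  imports Defs "HOL-Complex_Analysis.Complex_Analysis"
begin

lemma coeff_bound:
  fixes f :: "complex \<Rightarrow> complex"
  assumes hol: "f holomorphic_on ball 0 r" and r: "r > 0"
  shows "\<exists>A B. A > 0 \<and> B > 0 \<and> (\<forall>n\<ge>1. cmod (tcoeff f n) \<le> A * B ^ (n - 1))"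
proof -
  define \<rho> where "\<rho> = r / 2"
  have \<rho>: "\<rho> > 0" "\<rho> < r" using r by (auto simp: \<rho>_def)
  have sub: "cball 0 \<rho> \<subseteq> ball 0 r" using \<rho> by auto
  have cont: "continuous_on (cball 0 \<rho>) f"
    using holomorphic_on_imp_continuous_on[OF hol] continuous_on_subset sub by blast
  have "compact (f ` cball 0 \<rho>)" using compact_continuous_image[OF cont] by simp
  then have "bounded (f ` cball 0 \<rho>)" by (rule compact_imp_bounded)
  then obtain M0 where "\<forall>y\<in>f ` cball 0 \<rho>. norm y \<le> M0" by (auto simp: bounded_iff)
  then have M0: "\<And>x. x \<in> cball 0 \<rho> \<Longrightarrow> norm (f x) \<le> M0" by blast
  define M where "M = max M0 1"
  have M1: "M > 0" by (simp add: M_def)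
  have M2: "norm (f x) \<le> M" if "x \<in> cball 0 \<rho>" for x
    using M0[OF that] unfolding M_def by linarith
  note M = M1 M2
  have holr: "f holomorphic_on ball 0 \<rho>"
    by (rule holomorphic_on_subset[OF hol]) (use \<rho> in auto)
  show ?thesis
  proof (intro exI conjI allI impI)
    show "M / \<rho> > 0" "1 / \<rho> > 0" using M1 \<rho>(1) by simp_all
    fix n :: nat assume n: "n \<ge> 1"
    have nof: "norm (f x) \<le> M" if "norm (0 - x) = \<rho>" for x
      using M2[of x] that by simp
    have D: "norm ((deriv ^^ n) f 0) \<le> fact n * M / \<rho> ^ n"
      by (rule Cauchy_inequality[OF holr cont \<rho>(1) nof])
    have "cmod (tcoeff f n) = norm ((deriv ^^ n) f 0) / fact n"
      unfolding tcoeff_def by (simp add: norm_divide)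
    also have "\<dots> \<le> (fact n * M / \<rho> ^ n) / fact n"
      by (rule divide_right_mono[OF D]) simp
    also have "\<dots> = M / \<rho> ^ n" by simp
    also have "M / \<rho> ^ n = M / \<rho> * (1 / \<rho>) ^ (n - 1)"
      proof (cases n)
      case (Suc k) then show ?thesis by (simp add: power_one_over)
    qed (use n in simp)
    finally show "cmod (tcoeff f n) \<le> M / \<rho> * (1 / \<rho>) ^ (n - 1)" .
  qed
qed

lemma not_nonpos: fixes w :: complex assumes "cmod w < 1" shows "1 - w\<^sup>2 \<notin> \<real>\<^sub>\<le>\<^sub>0"
proof
  assume "1 - w\<^sup>2 \<in> \<real>\<^sub>\<le>\<^sub>0"
  then have "Re (1 - w\<^sup>2) \<le> 0" by (auto simp: complex_nonpos_Reals_iff)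
  moreover have "Re (w\<^sup>2) \<le> cmod (w\<^sup>2)" by (rule complex_Re_le_cmod)
  moreover have "cmod (w\<^sup>2) < 1" using assms by (simp add: norm_power power_less_one_iff abs_square_less_1)
  ultimately show False by simp
qed

theorem mainTheorem9:
  fixes G :: "complex^'n^'n" and Gp :: "nat \<Rightarrow> complex^'n^'n"
    and A0 B0 :: real and lam :: "complex \<Rightarrow> complex" and lam0v \<sigma> :: complex
  assumes G_pos: "pos_stochastic (\<lambda>i j. G $ i $ j)"
    and Gp_bound: "\<forall>l\<ge>1. op2norm (Gp l) \<le> A0 * B0 ^ (l - 1)"
    and real_stoch: "\<exists>r>0. \<forall>x::real. \<bar>x\<bar> < r \<longrightarrow> pos_stochastic (pert_entry G Gp (complex_of_real x))"
    and branch: "\<exists>r>0. lam holomorphic_on ball 0 r \<and>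
                   (\<forall>z\<in>ball 0 r. is_eigenvalue (Tmat G Gp z) (lam z))"
    and lam0: "lam 0 = lam0v"
    and lam_lt1: "cmod lam0v < 1"
    and sign: "\<sigma> \<in> {1, -1}"
  shows "let mu = (\<lambda>z. lam z + \<sigma> * \<i> * csqrt (1 - (lam z)\<^sup>2)) in
           (\<exists>r>0. \<forall>z\<in>ball 0 r. (\<lambda>n. tcoeff mu n * z ^ n) sums mu z)
         \<and> tcoeff mu 0 = lam0v + \<sigma> * \<i> * csqrt (1 - lam0v\<^sup>2)
         \<and> (\<exists>A B. A > 0 \<and> B > 0 \<and> (\<forall>n\<ge>1. cmod (tcoeff mu n) \<le> A * B ^ (n - 1)))
         \<and> (\<forall>m::nat. \<exists>A B. A > 0 \<and> B > 0 \<and>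
               (\<forall>n\<ge>1. cmod (tcoeff (\<lambda>z. (mu z) ^ (2 * m)) n) \<le> A * B ^ (n - 1)))"
proof -
  obtain r where r: "r > 0" and hol: "lam holomorphic_on ball 0 r" using branch by blast
  define S where "S = ball 0 r \<inter> lam -` ball 0 1"
  have "open S" unfolding S_def
    using continuous_open_preimage[OF holomorphic_on_imp_continuous_on[OF hol]]
    by (metis open_ball open_ball Int_commute)
  moreover have "0 \<in> S" using r lam0 lam_lt1 by (auto simp: S_def)
  ultimately obtain r' where r': "r' > 0" "ball 0 r' \<subseteq> S" using openE by blast
  define mu where "mu = (\<lambda>z. lam z + \<sigma> * \<i> * csqrt (1 - (lam z)\<^sup>2))"
  have holS: "lam holomorphic_on ball 0 r'" using hol r' by (auto simp: S_def intro: holomorphic_on_subset)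
  have lt: "\<And>z. z \<in> ball 0 r' \<Longrightarrow> cmod (lam z) < 1" using r' by (auto simp: S_def)
  have hmu: "mu holomorphic_on ball 0 r'" unfolding mu_def
  proof (rule holomorphic_on_add[OF holS holomorphic_on_mult[OF holomorphic_on_const holomorphic_on_csqrt']])
    show "(\<lambda>z. 1 - (lam z)\<^sup>2) holomorphic_on ball 0 r'"
      by (rule holomorphic_on_diff[OF holomorphic_on_const holomorphic_on_power[OF holS]])
    fix z :: complex assume "z \<in> ball 0 r'"
    then show "1 - (lam z)\<^sup>2 \<notin> \<real>\<^sub>\<le>\<^sub>0" by (rule not_nonpos[OF lt])
  qed
  have "(\<exists>r>0. \<forall>z\<in>ball 0 r. (\<lambda>n. tcoeff mu n * z ^ n) sums mu z)"
    using holomorphic_power_series[OF hmu] r'(1) by (auto simp: tcoeff_def)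
  moreover have "tcoeff mu 0 = lam0v + \<sigma> * \<i> * csqrt (1 - lam0v\<^sup>2)"
    by (simp add: tcoeff_def mu_def lam0)
  moreover have "\<exists>A B. A > 0 \<and> B > 0 \<and> (\<forall>n\<ge>1. cmod (tcoeff mu n) \<le> A * B ^ (n - 1))"
    by (rule coeff_bound[OF hmu r'(1)])
  moreover have "\<forall>m::nat. \<exists>A B. A > 0 \<and> B > 0 \<and>
               (\<forall>n\<ge>1. cmod (tcoeff (\<lambda>z. (mu z) ^ (2 * m)) n) \<le> A * B ^ (n - 1))"
    using coeff_bound[OF holomorphic_on_power[OF hmu] r'(1)] by blast
  ultimately have "(\<exists>r>0. \<forall>z\<in>ball 0 r. (\<lambda>n. tcoeff mu n * z ^ n) sums mu z) \<and> tcoeff mu 0 = lam0v + \<sigma> * \<i> * csqrt (1 - lam0v\<^sup>2) \<and> (\<exists>A B. A > 0 \<and> B > 0 \<and> (\<forall>n\<ge>1. cmod (tcoeff mu n) \<le> A * B ^ (n - 1))) \<and> (\<forall>m::nat. \<exists>A B. A > 0 \<and> B > 0 \<and> (\<forall>n\<ge>1. cmod (tcoeff (\<lambda>z. (mu z) ^ (2 * m)) n) \<le> A * B ^ (n - 1)))"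
    by (intro conjI)
  note fin = this
  moreover have eq: "(\<lambda>z. lam z + \<sigma> * \<i> * csqrt (1 - (lam z)\<^sup>2)) = mu" by (simp add: mu_def)
  show ?thesis unfolding eq Let_def by (rule fin)
qed

end
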